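(* Let $n\ge1$. For every permutation $\sigma$ of $\{1,\ldots,n\}$ let $P(\sigma)$ be its set-size record, and define $\mathrm{stackit}(\sigma)=S(P(\sigma))$ and $\mathrm{queueit}(\sigma)=Q(P(\sigma))$. Then $\mathrm{stackit}\circ\mathrm{stackit}=\mathrm{stackit}$ and its image is exactly the set of $312$-avoiding permutations, on which it is the identity; $\mathrm{queueit}\circ\mathrm{queueit}=\mathrm{queueit}$ and its image is exactly the set of $321$-avoiding permutations, on which it is the identity. Moreover, the restriction of $\mathrm{queueit}$ to $312$-avoiding permutations is a bijection onto the $321$-avoiding permutations, whose inverse is the restriction of $\mathrm{stackit}$ to $321$-avoiding permutations.
   Context: A weak Dyck path is a word in steps $U=(1,1)$, $D=(1,-1)$, $H=(1,0)$ starting and ending at height $0$ and never below $0$; it is peakless if no $U$ is immediately followed by $D$. Set-size record $P(\sigma)$: input $1,\ldots,n$ in order, a set (from which any element may be removed) initially empty. For $k=1,\ldots,n$ in turn, to output $\sigma_k$: if $\sigma_k$ is in the set, remove it to the output (step $D$); otherwise insert input elements into the set (one step $U$ each) until $\sigma_k$ is the next input element, then transfer it directly to output (step $H$). $P(\sigma)$ is the resulting word, a peakless weak Dyck path with $n$ steps of type $U$ or $H$. For such a path $P$, $S(P)$ (resp. $Q(P)$) is the output obtained by executing $P$ with a stack (resp. queue): input $1,\ldots,n$ in order; $U$ moves the next input element to the top of the stack (resp. back of the queue), $D$ moves the top of the stack (resp. front of the queue) to the end of the output, $H$ moves the next input element directly to the end of the output. A permutation avoids $312$ (resp. $321$) if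 there are no $i<j<k$ with $p_j<p_k<p_i$ (resp. $p_i>p_j>p_k$). *)

theory Defs
  imports Main
begin

datatype step = U | D | H

text \<open>Set-size record. State: next input element i, current set A.\<close>
fun ssr_aux :: "nat \<Rightarrow> nat set \<Rightarrow> nat list \<Rightarrow> step list" where
  "ssr_aux i A [] = []"
| "ssr_aux i A (x # xs) =
     (if x \<in> A then D # ssr_aux i (A - {x}) xs
      else replicate (x - i) U @ H # ssr_aux (Suc x) (A \<union> {i..<x}) xs)"

definition setsize_record :: "nat list \<Rightarrow> step list" where
  "setsize_record \<sigma> = ssr_aux 1 {} \<sigma>"

text \<open>Execution with a stack (top = head of list); input i, i+1, ...\<close>
fun run_stack :: "nat \<Rightarrow> nat list \<Rightarrow> step list \<Rightarrow> nat list" where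
  "run_stack i st [] = []"
| "run_stack i st (U # w) = run_stack (Suc i) (i # st) w"
| "run_stack i st (D # w) = hd st # run_stack i (tl st) w"
| "run_stack i st (H # w) = i # run_stack (Suc i) st w"

text \<open>Execution with a queue (front = head of list, back = end).\<close>
fun run_queue :: "nat \<Rightarrow> nat list \<Rightarrow> step list \<Rightarrow> nat list" where
  "run_queue i q [] = []"
| "run_queue i q (U # w) = run_queue (Suc i) (q @ [i]) w"
| "run_queue i q (D # w) = hd q # run_queue i (tl q) w"
| "run_queue i q (H # w) = i # run_queue (Suc i) q w"

definition S_out :: "step list \<Rightarrow> nat list" where "S_out P = run_stack 1 [] P"
definition Q_out :: "step list \<Rightarrow> nat list" where "Q_out P = run_queue 1 [] P"

definition stackit :: "nat list \<Rightarrow> nat list" where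
  "stackit \<sigma> = S_out (setsize_record \<sigma>)"
definition queueit :: "nat list \<Rightarrow> nat list" where
  "queueit \<sigma> = Q_out (setsize_record \<sigma>)"

definition perms :: "nat \<Rightarrow> nat list set" where
  "perms n = {\<sigma>. distinct \<sigma> \<and> set \<sigma> = {1..n}}"

definition avoids312 :: "nat list \<Rightarrow> bool" where
  "avoids312 p \<longleftrightarrow> \<not> (\<exists>i j k. i < j \<and> j < k \<and> k < length p \<and> p!j < p!k \<and> p!k < p!i)"

definition avoids321 :: "nat list \<Rightarrow> bool" where
  "avoids321 p \<longleftrightarrow> \<not> (\<exists>i j k. i < j \<and> j < k \<and> k < length p \<and> p!i > p!j \<and> p!j > p!k)"

end

theory Submission
  imports Defs
begin


lemma run_stack_U: "run_stack i st (replicate k U @ w) = run_stack (i+k) (rev [i..<i+k] @ st) w"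
proof (induction k arbitrary: i st)
  case 0 then show ?case by simp
next
  case (Suc k)
  have "run_stack i st (replicate (Suc k) U @ w) = run_stack (Suc i) (i # st) (replicate k U @ w)" by simp
  also have "\<dots> = run_stack (Suc i + k) (rev [Suc i..<Suc i+k] @ i # st) w" by (rule Suc.IH)
  also have "rev [Suc i..<Suc i+k] @ i # st = rev [i..<i + Suc k] @ st"
    by (simp add: upt_conv_Cons)
  finally show ?case by simp
qed

lemma run_queue_U: "run_queue i q (replicate k U @ w) = run_queue (i+k) (q @ [i..<i+k]) w"
proof (induction k arbitrary: i q)
  case 0 then show ?case by simp
next
  case (Suc k)
  have "run_queue i q (replicate (Suc k) U @ w) = run_queue (Suc i) (q @ [i]) (replicate k U @ w)" by simp
  also have "\<dots> = run_queue (Suc i + k) ((q @ [i]) @ [Suc i..<Suc i+k]) w" by (rule Suc.IH)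
  also have "(q @ [i]) @ [Suc i..<Suc i+k] = q @ [i..<i + Suc k]"
    by (simp add: upt_conv_Cons)
  finally show ?case by simp
qed

lemma set_split: "(x::nat) \<notin> A \<Longrightarrow> i \<le> x \<Longrightarrow> x \<le> n \<Longrightarrow> (A \<union> {i..n}) - {x} = A \<union> {i..<x} \<union> {Suc x..n}"
  by auto

lemma set_join: "(i::nat) \<le> x \<Longrightarrow> x \<le> n \<Longrightarrow> insert x ({i..<x} \<union> {Suc x..n}) = {i..n}"
  by auto

lemma stack_sim:
  assumes "distinct xs" "set xs = A \<union> {i..n}" "A \<subseteq> {..<i}" "length st = card A" "distinct st" "set st \<subseteq> {..<i}"
  shows "ssr_aux i (set st) (run_stack i st (ssr_aux i A xs)) = ssr_aux i A xs
       \<and> distinct (run_stack i st (ssr_aux i A xs))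
       \<and> set (run_stack i st (ssr_aux i A xs)) = set st \<union> {i..n}"
  using assms
proof (induction xs arbitrary: i A st)
  case Nil
  then have A: "A = {}" and I: "{i..n} = {}" using Nil.prems(2) by auto
  then have "st = []" using Nil.prems(4) A by simp
  then show ?case using I by simp
next
  case (Cons x xs)
  have fin: "finite A" using Cons.prems(3) by (meson finite_lessThan finite_subset)
  show ?case
  proof (cases "x \<in> A")
    case True
    have "card A > 0" using True fin by (auto simp: card_gt_0_iff)
    then have "st \<noteq> []" using Cons.prems(4) by auto
    then obtain s st' where st: "st = s # st'" by (metis list.exhaust)
    let ?r = "run_stack i st' (ssr_aux i (A - {x}) xs)"
    have xi: "x < i" using True Cons.prems(3) by auto
    have IH: "ssr_aux i (set st') ?r = ssr_aux i (A-{x}) xs \<and> distinct ?r \<and> set ?r = set st' \<union> {i..n}"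
    proof (rule Cons.IH)
      show "distinct xs" using Cons.prems(1) by simp
      have "set xs = set (x#xs) - {x}" using Cons.prems(1) by auto
      then have "set xs = (A \<union> {i..n}) - {x}" unfolding Cons.prems(2) .
      moreover have "x \<notin> {i..n}" using xi by simp
      ultimately show "set xs = A - {x} \<union> {i..n}" by blast
      show "A - {x} \<subseteq> {..<i}" using Cons.prems(3) by auto
      show "length st' = card (A - {x})" using Cons.prems(4) st True fin by simp
      show "distinct st'" using Cons.prems(5) st by simp
      show "set st' \<subseteq> {..<i}" using Cons.prems(6) st by simp
    qed
    have s: "s \<notin> set st'" "s < i" using Cons.prems(5,6) st by auto
    have e: "set (s # st') - {s} = set st'" using s by auto
    show ?thesis using IH st True s e by auto
  next
    case False
    have xi: "i \<le> x" "x \<le> n" using False Cons.prems(2) by auto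
    let ?st = "rev [i..<x] @ st"
    let ?r = "run_stack (Suc x) ?st (ssr_aux (Suc x) (A \<union> {i..<x}) xs)"
    have IH: "ssr_aux (Suc x) (set ?st) ?r = ssr_aux (Suc x) (A \<union> {i..<x}) xs \<and> distinct ?r \<and> set ?r = set ?st \<union> {Suc x..n}"
    proof (rule Cons.IH)
      show "distinct xs" using Cons.prems(1) by simp
      have "set xs = set (x#xs) - {x}" using Cons.prems(1) by auto
      then have "set xs = (A \<union> {i..n}) - {x}" unfolding Cons.prems(2) .
      then show "set xs = A \<union> {i..<x} \<union> {Suc x..n}" using set_split[OF False xi] by (simp only:)
      show "A \<union> {i..<x} \<subseteq> {..<Suc x}" using Cons.prems(3) xi by auto
      have "A \<inter> {i..<x} = {}" using Cons.prems(3) by auto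
      then have "card (A \<union> {i..<x}) = card A + (x - i)" using fin by (simp add: card_Un_disjoint)
      then show "length ?st = card (A \<union> {i..<x})" using Cons.prems(4) by simp
      show "distinct ?st" using Cons.prems(5,6) by auto
      show "set ?st \<subseteq> {..<Suc x}" using Cons.prems(6) xi by auto
    qed
    have run: "run_stack i st (ssr_aux i A (x#xs)) = x # ?r"
      using False run_stack_U[of i st "x-i"] xi by simp
    have xst: "x \<notin> set st" using Cons.prems(6) xi by auto
    have sst: "set ?st = set st \<union> {i..<x}" by auto
    have "ssr_aux i (set st) (x # ?r) = ssr_aux i A (x#xs)"
      using xst False IH sst by simp
    moreover have "distinct (x # ?r)" using IH xst by auto
    moreover have "set (x # ?r) = set st \<union> {i..n}"
    proof -
      have "set (x # ?r) = set st \<union> insert x ({i..<x} \<union> {Suc x..n})" using IH sst by auto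
      then show ?thesis using set_join[OF xi] by simp
    qed
    ultimately show ?thesis using run by simp
  qed
qed
lemma queue_sim:
  assumes "distinct xs" "set xs = A \<union> {i..n}" "A \<subseteq> {..<i}" "length st = card A" "distinct st" "set st \<subseteq> {..<i}"
  shows "ssr_aux i (set st) (run_queue i st (ssr_aux i A xs)) = ssr_aux i A xs
       \<and> distinct (run_queue i st (ssr_aux i A xs))
       \<and> set (run_queue i st (ssr_aux i A xs)) = set st \<union> {i..n}"
  using assms
proof (induction xs arbitrary: i A st)
  case Nil
  then have A: "A = {}" and I: "{i..n} = {}" using Nil.prems(2) by auto
  then have "st = []" using Nil.prems(4) A by simp
  then show ?case using I by simp
next
  case (Cons x xs)
  have fin: "finite A" using Cons.prems(3) by (meson finite_lessThan finite_subset)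
  show ?case
  proof (cases "x \<in> A")
    case True
    have "card A > 0" using True fin by (auto simp: card_gt_0_iff)
    then have "st \<noteq> []" using Cons.prems(4) by auto
    then obtain s st' where st: "st = s # st'" by (metis list.exhaust)
    let ?r = "run_queue i st' (ssr_aux i (A - {x}) xs)"
    have xi: "x < i" using True Cons.prems(3) by auto
    have IH: "ssr_aux i (set st') ?r = ssr_aux i (A-{x}) xs \<and> distinct ?r \<and> set ?r = set st' \<union> {i..n}"
    proof (rule Cons.IH)
      show "distinct xs" using Cons.prems(1) by simp
      have "set xs = set (x#xs) - {x}" using Cons.prems(1) by auto
      then have "set xs = (A \<union> {i..n}) - {x}" unfolding Cons.prems(2) .
      moreover have "x \<notin> {i..n}" using xi by simp
      ultimately show "set xs = A - {x} \<union> {i..n}" by blast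
      show "A - {x} \<subseteq> {..<i}" using Cons.prems(3) by auto
      show "length st' = card (A - {x})" using Cons.prems(4) st True fin by simp
      show "distinct st'" using Cons.prems(5) st by simp
      show "set st' \<subseteq> {..<i}" using Cons.prems(6) st by simp
    qed
    have s: "s \<notin> set st'" "s < i" using Cons.prems(5,6) st by auto
    have e: "set (s # st') - {s} = set st'" using s by auto
    show ?thesis using IH st True s e by auto
  next
    case False
    have xi: "i \<le> x" "x \<le> n" using False Cons.prems(2) by auto
    let ?st = "st @ [i..<x]"
    let ?r = "run_queue (Suc x) ?st (ssr_aux (Suc x) (A \<union> {i..<x}) xs)"
    have IH: "ssr_aux (Suc x) (set ?st) ?r = ssr_aux (Suc x) (A \<union> {i..<x}) xs \<and> distinct ?r \<and> set ?r = set ?st \<union> {Suc x..n}"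
    proof (rule Cons.IH)
      show "distinct xs" using Cons.prems(1) by simp
      have "set xs = set (x#xs) - {x}" using Cons.prems(1) by auto
      then have "set xs = (A \<union> {i..n}) - {x}" unfolding Cons.prems(2) .
      then show "set xs = A \<union> {i..<x} \<union> {Suc x..n}" using set_split[OF False xi] by (simp only:)
      show "A \<union> {i..<x} \<subseteq> {..<Suc x}" using Cons.prems(3) xi by auto
      have "A \<inter> {i..<x} = {}" using Cons.prems(3) by auto
      then have "card (A \<union> {i..<x}) = card A + (x - i)" using fin by (simp add: card_Un_disjoint)
      then show "length ?st = card (A \<union> {i..<x})" using Cons.prems(4) by simp
      show "distinct ?st" using Cons.prems(5,6) by auto
      show "set ?st \<subseteq> {..<Suc x}" using Cons.prems(6) xi by auto
    qed
    have run: "run_queue i st (ssr_aux i A (x#xs)) = x # ?r"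
      using False run_queue_U[of i st "x-i"] xi by simp
    have xst: "x \<notin> set st" using Cons.prems(6) xi by auto
    have sst: "set ?st = set st \<union> {i..<x}" by auto
    have "ssr_aux i (set st) (x # ?r) = ssr_aux i A (x#xs)"
      using xst False IH sst by simp
    moreover have "distinct (x # ?r)" using IH xst by auto
    moreover have "set (x # ?r) = set st \<union> {i..n}"
    proof -
      have "set (x # ?r) = set st \<union> insert x ({i..<x} \<union> {Suc x..n})" using IH sst by auto
      then show ?thesis using set_join[OF xi] by simp
    qed
    ultimately show ?thesis using run by simp
  qed
qed

fun ok312 :: "nat set \<Rightarrow> nat list \<Rightarrow> bool" where
  "ok312 A [] = True"
| "ok312 A (x # xs) = ((\<forall>b\<in>set xs. x < b \<longrightarrow> b \<notin> A) \<and> ok312 (A \<union> {y\<in>set xs. y < x}) xs)"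

fun ok321 :: "nat set \<Rightarrow> nat list \<Rightarrow> bool" where
  "ok321 A [] = True"
| "ok321 A (x # xs) = ((x \<in> A \<longrightarrow> (\<forall>b\<in>set xs. \<not> b < x)) \<and> ok321 (A \<union> {y\<in>set xs. y < x}) xs)"

lemma ok312_cong: "\<forall>y\<in>set xs. (y \<in> A) = (y \<in> B) \<Longrightarrow> ok312 A xs = ok312 B xs"
proof (induction xs arbitrary: A B)
  case Nil then show ?case by simp
next
  case (Cons x xs)
  have "ok312 (A \<union> {y\<in>set xs. y < x}) xs = ok312 (B \<union> {y\<in>set xs. y < x}) xs"
    by (rule Cons.IH) (use Cons.prems in auto)
  moreover have "(\<forall>b\<in>set xs. x < b \<longrightarrow> b \<notin> A) = (\<forall>b\<in>set xs. x < b \<longrightarrow> b \<notin> B)"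
    using Cons.prems by auto
  ultimately show ?case by simp
qed

lemma ok321_cong: "\<forall>y\<in>set xs. (y \<in> A) = (y \<in> B) \<Longrightarrow> ok321 A xs = ok321 B xs"
proof (induction xs arbitrary: A B)
  case Nil then show ?case by simp
next
  case (Cons x xs)
  have "ok321 (A \<union> {y\<in>set xs. y < x}) xs = ok321 (B \<union> {y\<in>set xs. y < x}) xs"
    by (rule Cons.IH) (use Cons.prems in auto)
  moreover have "(x \<in> A) = (x \<in> B)" using Cons.prems by auto
  ultimately show ?case by simp
qed

lemma set_lt: "(x::nat) \<notin> A \<Longrightarrow> i \<le> x \<Longrightarrow> x \<le> n \<Longrightarrow> A \<subseteq> {..<i} \<Longrightarrow>
   A \<union> {y \<in> (A \<union> {i..n}) - {x}. y < x} = A \<union> {i..<x}"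
  by auto

lemma stack_id:
  assumes "distinct xs" "set xs = A \<union> {i..n}" "A \<subseteq> {..<i}" "sorted_wrt (>) st" "set st = A"
  shows "run_stack i st (ssr_aux i A xs) = xs \<longleftrightarrow> ok312 A xs"
  using assms
proof (induction xs arbitrary: i A st)
  case Nil then show ?case by simp
next
  case (Cons x xs)
  have "set xs = set (x#xs) - {x}" using Cons.prems(1) by auto
  then have sx: "set xs = (A \<union> {i..n}) - {x}" unfolding Cons.prems(2) .
  have xns: "x \<notin> set xs" using Cons.prems(1) by simp
  show ?case
  proof (cases "x \<in> A")
    case True
    have xi: "x < i" using True Cons.prems(3) by auto
    have "st \<noteq> []" using True Cons.prems(5) by auto
    then obtain s st' where st: "st = s # st'" by (metis list.exhaust)
    have sst': "\<forall>y\<in>set st'. y < s" "sorted_wrt (>) st'" using Cons.prems(4) st by auto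
    have sns: "s \<notin> set st'" using sst' by auto
    have As: "A = insert s (set st')" using Cons.prems(5) st by auto
    have sub: "{y \<in> set xs. y < x} \<subseteq> A"
    proof
      fix y assume "y \<in> {y \<in> set xs. y < x}"
      then have y1: "y \<in> set xs" and y2: "y < x" by auto
      have "y \<in> A \<union> {i..n}" using y1 sx by blast
      moreover have "y \<notin> {i..n}" using y2 xi by simp
      ultimately show "y \<in> A" by blast
    qed
    have okeq: "ok312 (A \<union> {y \<in> set xs. y < x}) xs = ok312 (A - {x}) xs"
      by (rule ok312_cong) (use sub xns in auto)
    have cond: "s = x \<longleftrightarrow> (\<forall>b\<in>set xs. x < b \<longrightarrow> b \<notin> A)"
    proof
      assume "s = x"
      then show "\<forall>b\<in>set xs. x < b \<longrightarrow> b \<notin> A" using sst' As xns by auto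
    next
      assume H: "\<forall>b\<in>set xs. x < b \<longrightarrow> b \<notin> A"
      show "s = x"
      proof (rule ccontr)
        assume ne: "s \<noteq> x"
        then have "x \<in> set st'" using As True by auto
        then have "x < s" using sst' by auto
        moreover have "s \<in> A" using As by auto
        moreover have "s \<in> set xs" using sx ne \<open>s \<in> A\<close> by auto
        ultimately show False using H by auto
      qed
    qed
    have run: "run_stack i st (ssr_aux i A (x#xs)) = s # run_stack i st' (ssr_aux i (A - {x}) xs)"
      using True st by simp
    show ?thesis
    proof (cases "s = x")
      case True2: True
      have IH: "run_stack i st' (ssr_aux i (A - {x}) xs) = xs \<longleftrightarrow> ok312 (A - {x}) xs"
      proof (rule Cons.IH)
        show "distinct xs" using Cons.prems(1) by simp
        have "x \<notin> {i..n}" using xi by simp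
        then show "set xs = A - {x} \<union> {i..n}" using sx by blast
        show "A - {x} \<subseteq> {..<i}" using Cons.prems(3) by auto
        show "sorted_wrt (>) st'" using sst' by simp
        show "set st' = A - {x}" using As sns True2 by auto
      qed
      show ?thesis using run IH okeq cond True2 by simp
    next
      case False2: False
      show ?thesis using run okeq cond False2 by simp
    qed
  next
    case False
    have xi: "i \<le> x" "x \<le> n" using False Cons.prems(2) by auto
    let ?st = "rev [i..<x] @ st"
    have IH: "run_stack (Suc x) ?st (ssr_aux (Suc x) (A \<union> {i..<x}) xs) = xs \<longleftrightarrow> ok312 (A \<union> {i..<x}) xs"
    proof (rule Cons.IH)
      show "distinct xs" using Cons.prems(1) by simp
      show "set xs = A \<union> {i..<x} \<union> {Suc x..n}" using sx set_split[OF False xi] by (simp only:)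
      show "A \<union> {i..<x} \<subseteq> {..<Suc x}" using Cons.prems(3) xi by auto
      show "sorted_wrt (>) ?st" using Cons.prems(3,4,5)
        by (auto simp: sorted_wrt_append sorted_wrt_rev)
      show "set ?st = A \<union> {i..<x}" using Cons.prems(5) by auto
    qed
    have run: "run_stack i st (ssr_aux i A (x#xs)) = x # run_stack (Suc x) ?st (ssr_aux (Suc x) (A \<union> {i..<x}) xs)"
      using False run_stack_U[of i st "x-i"] xi by simp
    have c1: "\<forall>b\<in>set xs. x < b \<longrightarrow> b \<notin> A" using Cons.prems(3) xi by auto
    have c2: "A \<union> {y\<in>set xs. y < x} = A \<union> {i..<x}"
      using set_lt[OF False xi Cons.prems(3)] sx by simp
    show ?thesis using run IH c1 c2 by simp
  qed
qed

lemma queue_id: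
  assumes "distinct xs" "set xs = A \<union> {i..n}" "A \<subseteq> {..<i}" "sorted_wrt (<) st" "set st = A"
  shows "run_queue i st (ssr_aux i A xs) = xs \<longleftrightarrow> ok321 A xs"
  using assms
proof (induction xs arbitrary: i A st)
  case Nil then show ?case by simp
next
  case (Cons x xs)
  have "set xs = set (x#xs) - {x}" using Cons.prems(1) by auto
  then have sx: "set xs = (A \<union> {i..n}) - {x}" unfolding Cons.prems(2) .
  have xns: "x \<notin> set xs" using Cons.prems(1) by simp
  show ?case
  proof (cases "x \<in> A")
    case True
    have xi: "x < i" using True Cons.prems(3) by auto
    have "st \<noteq> []" using True Cons.prems(5) by auto
    then obtain s st' where st: "st = s # st'" by (metis list.exhaust)
    have sst': "\<forall>y\<in>set st'. s < y" "sorted_wrt (<) st'" using Cons.prems(4) st by auto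
    have sns: "s \<notin> set st'" using sst' by auto
    have As: "A = insert s (set st')" using Cons.prems(5) st by auto
    have sub: "{y \<in> set xs. y < x} \<subseteq> A"
    proof
      fix y assume "y \<in> {y \<in> set xs. y < x}"
      then have y1: "y \<in> set xs" and y2: "y < x" by auto
      have "y \<in> A \<union> {i..n}" using y1 sx by blast
      moreover have "y \<notin> {i..n}" using y2 xi by simp
      ultimately show "y \<in> A" by blast
    qed
    have okeq: "ok321 (A \<union> {y \<in> set xs. y < x}) xs = ok321 (A - {x}) xs"
      by (rule ok321_cong) (use sub xns in auto)
    have cond: "s = x \<longleftrightarrow> (\<forall>b\<in>set xs. \<not> b < x)"
    proof
      assume sx': "s = x"
      show "\<forall>b\<in>set xs. \<not> b < x"
      proof
        fix b assume b: "b \<in> set xs"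
        then have "b \<in> A \<union> {i..n}" using sx by blast
        moreover have "b \<noteq> x" using b xns by auto
        ultimately have "b \<in> set st' \<or> i \<le> b" using As sx' by auto
        then show "\<not> b < x" using sst' sx' xi by auto
      qed
    next
      assume H: "\<forall>b\<in>set xs. \<not> b < x"
      show "s = x"
      proof (rule ccontr)
        assume ne: "s \<noteq> x"
        then have "x \<in> set st'" using As True by auto
        then have "s < x" using sst' by auto
        moreover have "s \<in> A" using As by auto
        moreover have "s \<in> set xs" using sx ne \<open>s \<in> A\<close> by auto
        ultimately show False using H by auto
      qed
    qed
    have run: "run_queue i st (ssr_aux i A (x#xs)) = s # run_queue i st' (ssr_aux i (A - {x}) xs)"
      using True st by simp
    show ?thesis
    proof (cases "s = x")
      case True2: True
      have IH: "run_queue i st' (ssr_aux i (A - {x}) xs) = xs \<longleftrightarrow> ok321 (A - {x}) xs"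
      proof (rule Cons.IH)
        show "distinct xs" using Cons.prems(1) by simp
        have "x \<notin> {i..n}" using xi by simp
        then show "set xs = A - {x} \<union> {i..n}" using sx by blast
        show "A - {x} \<subseteq> {..<i}" using Cons.prems(3) by auto
        show "sorted_wrt (<) st'" using sst' by simp
        show "set st' = A - {x}" using As sns True2 by auto
      qed
      show ?thesis using run IH okeq cond True2 True by simp
    next
      case False2: False
      show ?thesis using run okeq cond False2 True by simp
    qed
  next
    case False
    have xi: "i \<le> x" "x \<le> n" using False Cons.prems(2) by auto
    let ?st = "st @ [i..<x]"
    have IH: "run_queue (Suc x) ?st (ssr_aux (Suc x) (A \<union> {i..<x}) xs) = xs \<longleftrightarrow> ok321 (A \<union> {i..<x}) xs"
    proof (rule Cons.IH)
      show "distinct xs" using Cons.prems(1) by simp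
      show "set xs = A \<union> {i..<x} \<union> {Suc x..n}" using sx set_split[OF False xi] by (simp only:)
      show "A \<union> {i..<x} \<subseteq> {..<Suc x}" using Cons.prems(3) xi by auto
      show "sorted_wrt (<) ?st" using Cons.prems(3,4,5)
        by (auto simp: sorted_wrt_append)
      show "set ?st = A \<union> {i..<x}" using Cons.prems(5) by auto
    qed
    have run: "run_queue i st (ssr_aux i A (x#xs)) = x # run_queue (Suc x) ?st (ssr_aux (Suc x) (A \<union> {i..<x}) xs)"
      using False run_queue_U[of i st "x-i"] xi by simp
    have c2: "A \<union> {y\<in>set xs. y < x} = A \<union> {i..<x}"
      using set_lt[OF False xi Cons.prems(3)] sx by simp
    show ?thesis using run IH False c2 by simp
  qed
qed


lemma pairs_Cons: "(\<forall>j k. j < k \<longrightarrow> k < length (x#xs) \<longrightarrow> R ((x#xs)!j) ((x#xs)!k)) \<longleftrightarrow>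
   (\<forall>b\<in>set xs. R x b) \<and> (\<forall>j k. j < k \<longrightarrow> k < length xs \<longrightarrow> R (xs!j) (xs!k))"
proof
  assume H: "\<forall>j k. j < k \<longrightarrow> k < length (x#xs) \<longrightarrow> R ((x#xs)!j) ((x#xs)!k)"
  have "\<forall>b\<in>set xs. R x b"
  proof
    fix b assume "b \<in> set xs"
    then obtain k where "k < length xs" "b = xs!k" by (metis in_set_conv_nth)
    then show "R x b" using H[rule_format, of 0 "Suc k"] by simp
  qed
  moreover have "\<forall>j k. j < k \<longrightarrow> k < length xs \<longrightarrow> R (xs!j) (xs!k)"
  proof (intro allI impI)
    fix j k assume "j < k" "k < length xs"
    then show "R (xs!j) (xs!k)" using H[rule_format, of "Suc j" "Suc k"] by simp
  qed
  ultimately show "(\<forall>b\<in>set xs. R x b) \<and> (\<forall>j k. j < k \<longrightarrow> k < length xs \<longrightarrow> R (xs!j) (xs!k))" by blast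
next
  assume H: "(\<forall>b\<in>set xs. R x b) \<and> (\<forall>j k. j < k \<longrightarrow> k < length xs \<longrightarrow> R (xs!j) (xs!k))"
  show "\<forall>j k. j < k \<longrightarrow> k < length (x#xs) \<longrightarrow> R ((x#xs)!j) ((x#xs)!k)"
  proof (intro allI impI)
    fix j k assume jk: "j < k" "k < length (x#xs)"
    then obtain k' where k: "k = Suc k'" by (metis less_imp_Suc_add)
    show "R ((x#xs)!j) ((x#xs)!k)"
    proof (cases j)
      case 0 then show ?thesis using H jk k by simp
    next
      case (Suc j') then show ?thesis using H jk k by simp
    qed
  qed
qed

lemma triples_Cons: "(\<forall>i j k. i < j \<longrightarrow> j < k \<longrightarrow> k < length (x#xs) \<longrightarrow> T ((x#xs)!i) ((x#xs)!j) ((x#xs)!k)) \<longleftrightarrow>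
   (\<forall>j k. j < k \<longrightarrow> k < length xs \<longrightarrow> T x (xs!j) (xs!k)) \<and>
   (\<forall>i j k. i < j \<longrightarrow> j < k \<longrightarrow> k < length xs \<longrightarrow> T (xs!i) (xs!j) (xs!k))"
proof
  assume H: "\<forall>i j k. i < j \<longrightarrow> j < k \<longrightarrow> k < length (x#xs) \<longrightarrow> T ((x#xs)!i) ((x#xs)!j) ((x#xs)!k)"
  have "\<forall>j k. j < k \<longrightarrow> k < length xs \<longrightarrow> T x (xs!j) (xs!k)"
  proof (intro allI impI)
    fix j k assume "j < k" "k < length xs"
    then show "T x (xs!j) (xs!k)" using H[rule_format, of 0 "Suc j" "Suc k"] by simp
  qed
  moreover have "\<forall>i j k. i < j \<longrightarrow> j < k \<longrightarrow> k < length xs \<longrightarrow> T (xs!i) (xs!j) (xs!k)"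
  proof (intro allI impI)
    fix i j k assume "i < j" "j < k" "k < length xs"
    then show "T (xs!i) (xs!j) (xs!k)" using H[rule_format, of "Suc i" "Suc j" "Suc k"] by simp
  qed
  ultimately show "(\<forall>j k. j < k \<longrightarrow> k < length xs \<longrightarrow> T x (xs!j) (xs!k)) \<and>
   (\<forall>i j k. i < j \<longrightarrow> j < k \<longrightarrow> k < length xs \<longrightarrow> T (xs!i) (xs!j) (xs!k))" by blast
next
  assume H: "(\<forall>j k. j < k \<longrightarrow> k < length xs \<longrightarrow> T x (xs!j) (xs!k)) \<and>
   (\<forall>i j k. i < j \<longrightarrow> j < k \<longrightarrow> k < length xs \<longrightarrow> T (xs!i) (xs!j) (xs!k))"
  show "\<forall>i j k. i < j \<longrightarrow> j < k \<longrightarrow> k < length (x#xs) \<longrightarrow> T ((x#xs)!i) ((x#xs)!j) ((x#xs)!k)"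
  proof (intro allI impI)
    fix i j k assume ijk: "i < j" "j < k" "k < length (x#xs)"
    then obtain j' where j: "j = Suc j'" by (metis less_imp_Suc_add)
    from ijk obtain k' where k: "k = Suc k'" by (metis less_imp_Suc_add)
    show "T ((x#xs)!i) ((x#xs)!j) ((x#xs)!k)"
    proof (cases i)
      case 0 then show ?thesis using H ijk j k by simp
    next
      case (Suc i') then show ?thesis using H ijk j k by simp
    qed
  qed
qed

lemma avoids312_alt: "avoids312 p \<longleftrightarrow> (\<forall>i j k. i < j \<longrightarrow> j < k \<longrightarrow> k < length p \<longrightarrow> \<not> (p!j < p!k \<and> p!k < p!i))"
  unfolding avoids312_def by blast

lemma avoids321_alt: "avoids321 p \<longleftrightarrow> (\<forall>i j k. i < j \<longrightarrow> j < k \<longrightarrow> k < length p \<longrightarrow> \<not> (p!j < p!i \<and> p!k < p!j))"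
  unfolding avoids321_def by blast

lemma ok312_iff: "ok312 A xs \<longleftrightarrow> (\<forall>j k. j < k \<longrightarrow> k < length xs \<longrightarrow> (xs!j < xs!k \<longrightarrow> xs!k \<notin> A))
   \<and> (\<forall>i j k. i < j \<longrightarrow> j < k \<longrightarrow> k < length xs \<longrightarrow> \<not> (xs!j < xs!k \<and> xs!k < xs!i))"
proof (induction xs arbitrary: A)
  case Nil then show ?case by simp
next
  case (Cons x xs)
  let ?A' = "A \<union> {y\<in>set xs. y < x}"
  have 1: "(\<forall>j k. j < k \<longrightarrow> k < length (x#xs) \<longrightarrow> ((x#xs)!j < (x#xs)!k \<longrightarrow> (x#xs)!k \<notin> A)) \<longleftrightarrow>
     (\<forall>b\<in>set xs. x < b \<longrightarrow> b \<notin> A) \<and> (\<forall>j k. j < k \<longrightarrow> k < length xs \<longrightarrow> (xs!j < xs!k \<longrightarrow> xs!k \<notin> A))"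
    by (rule pairs_Cons[where R="\<lambda>a b. a < b \<longrightarrow> b \<notin> A"])
  have 2: "(\<forall>i j k. i < j \<longrightarrow> j < k \<longrightarrow> k < length (x#xs) \<longrightarrow> \<not> ((x#xs)!j < (x#xs)!k \<and> (x#xs)!k < (x#xs)!i)) \<longleftrightarrow>
     (\<forall>j k. j < k \<longrightarrow> k < length xs \<longrightarrow> \<not> (xs!j < xs!k \<and> xs!k < x)) \<and>
     (\<forall>i j k. i < j \<longrightarrow> j < k \<longrightarrow> k < length xs \<longrightarrow> \<not> (xs!j < xs!k \<and> xs!k < xs!i))"
    by (rule triples_Cons[where T="\<lambda>a b c. \<not> (b < c \<and> c < a)"])
  have 3: "(\<forall>j k. j < k \<longrightarrow> k < length xs \<longrightarrow> (xs!j < xs!k \<longrightarrow> xs!k \<notin> ?A')) \<longleftrightarrow>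
     (\<forall>j k. j < k \<longrightarrow> k < length xs \<longrightarrow> (xs!j < xs!k \<longrightarrow> xs!k \<notin> A)) \<and>
     (\<forall>j k. j < k \<longrightarrow> k < length xs \<longrightarrow> \<not> (xs!j < xs!k \<and> xs!k < x))"
    by (auto simp: nth_mem)
  show ?case unfolding ok312.simps Cons.IH[of ?A'] 1 2 3 by blast
qed

lemma ok321_iff: "ok321 A xs \<longleftrightarrow> (\<forall>j k. j < k \<longrightarrow> k < length xs \<longrightarrow> (xs!j \<in> A \<longrightarrow> \<not> xs!k < xs!j))
   \<and> (\<forall>i j k. i < j \<longrightarrow> j < k \<longrightarrow> k < length xs \<longrightarrow> \<not> (xs!j < xs!i \<and> xs!k < xs!j))"
proof (induction xs arbitrary: A)
  case Nil then show ?case by simp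
next
  case (Cons x xs)
  let ?A' = "A \<union> {y\<in>set xs. y < x}"
  have 1: "(\<forall>j k. j < k \<longrightarrow> k < length (x#xs) \<longrightarrow> ((x#xs)!j \<in> A \<longrightarrow> \<not> (x#xs)!k < (x#xs)!j)) \<longleftrightarrow>
     (\<forall>b\<in>set xs. x \<in> A \<longrightarrow> \<not> b < x) \<and> (\<forall>j k. j < k \<longrightarrow> k < length xs \<longrightarrow> (xs!j \<in> A \<longrightarrow> \<not> xs!k < xs!j))"
    by (rule pairs_Cons[where R="\<lambda>a b. a \<in> A \<longrightarrow> \<not> b < a"])
  have 2: "(\<forall>i j k. i < j \<longrightarrow> j < k \<longrightarrow> k < length (x#xs) \<longrightarrow> \<not> ((x#xs)!j < (x#xs)!i \<and> (x#xs)!k < (x#xs)!j)) \<longleftrightarrow>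
     (\<forall>j k. j < k \<longrightarrow> k < length xs \<longrightarrow> \<not> (xs!j < x \<and> xs!k < xs!j)) \<and>
     (\<forall>i j k. i < j \<longrightarrow> j < k \<longrightarrow> k < length xs \<longrightarrow> \<not> (xs!j < xs!i \<and> xs!k < xs!j))"
    by (rule triples_Cons[where T="\<lambda>a b c. \<not> (b < a \<and> c < b)"])
  have 3: "(\<forall>j k. j < k \<longrightarrow> k < length xs \<longrightarrow> (xs!j \<in> ?A' \<longrightarrow> \<not> xs!k < xs!j)) \<longleftrightarrow>
     (\<forall>j k. j < k \<longrightarrow> k < length xs \<longrightarrow> (xs!j \<in> A \<longrightarrow> \<not> xs!k < xs!j)) \<and>
     (\<forall>j k. j < k \<longrightarrow> k < length xs \<longrightarrow> \<not> (xs!j < x \<and> xs!k < xs!j))"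
    using nth_mem[of _ xs] by (auto; meson less_trans)
  have 4: "(x \<in> A \<longrightarrow> (\<forall>b\<in>set xs. \<not> b < x)) = (\<forall>b\<in>set xs. x \<in> A \<longrightarrow> \<not> b < x)" by blast
  show ?case unfolding ok321.simps Cons.IH[of ?A'] 1 2 3 4 by blast
qed

lemma ok312_avoids: "ok312 {} xs \<longleftrightarrow> avoids312 xs"
  unfolding ok312_iff avoids312_alt by simp

lemma ok321_avoids: "ok321 {} xs \<longleftrightarrow> avoids321 xs"
  unfolding ok321_iff avoids321_alt by simp


lemma stack_facts:
  assumes "\<sigma> \<in> perms n"
  shows "stackit \<sigma> \<in> perms n \<and> setsize_record (stackit \<sigma>) = setsize_record \<sigma>"
proof -
  have d: "distinct \<sigma>" and st: "set \<sigma> = {} \<union> {1..n}" using assms by (auto simp: perms_def)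
  have "ssr_aux 1 (set []) (run_stack 1 [] (ssr_aux 1 {} \<sigma>)) = ssr_aux 1 {} \<sigma>
       \<and> distinct (run_stack 1 [] (ssr_aux 1 {} \<sigma>))
       \<and> set (run_stack 1 [] (ssr_aux 1 {} \<sigma>)) = set [] \<union> {1..n}"
    by (rule stack_sim[OF d st]) auto
  then show ?thesis by (simp add: stackit_def S_out_def setsize_record_def perms_def)
qed

lemma queue_facts:
  assumes "\<sigma> \<in> perms n"
  shows "queueit \<sigma> \<in> perms n \<and> setsize_record (queueit \<sigma>) = setsize_record \<sigma>"
proof -
  have d: "distinct \<sigma>" and st: "set \<sigma> = {} \<union> {1..n}" using assms by (auto simp: perms_def)
  have "ssr_aux 1 (set []) (run_queue 1 [] (ssr_aux 1 {} \<sigma>)) = ssr_aux 1 {} \<sigma>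
       \<and> distinct (run_queue 1 [] (ssr_aux 1 {} \<sigma>))
       \<and> set (run_queue 1 [] (ssr_aux 1 {} \<sigma>)) = set [] \<union> {1..n}"
    by (rule queue_sim[OF d st]) auto
  then show ?thesis by (simp add: queueit_def Q_out_def setsize_record_def perms_def)
qed

lemma stack_fix:
  assumes "\<sigma> \<in> perms n"
  shows "stackit \<sigma> = \<sigma> \<longleftrightarrow> avoids312 \<sigma>"
proof -
  have d: "distinct \<sigma>" and st: "set \<sigma> = {} \<union> {1..n}" using assms by (auto simp: perms_def)
  have "run_stack 1 [] (ssr_aux 1 {} \<sigma>) = \<sigma> \<longleftrightarrow> ok312 {} \<sigma>"
    by (rule stack_id[OF d st]) auto
  then show ?thesis by (simp add: stackit_def S_out_def setsize_record_def ok312_avoids)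
qed

lemma queue_fix:
  assumes "\<sigma> \<in> perms n"
  shows "queueit \<sigma> = \<sigma> \<longleftrightarrow> avoids321 \<sigma>"
proof -
  have d: "distinct \<sigma>" and st: "set \<sigma> = {} \<union> {1..n}" using assms by (auto simp: perms_def)
  have "run_queue 1 [] (ssr_aux 1 {} \<sigma>) = \<sigma> \<longleftrightarrow> ok321 {} \<sigma>"
    by (rule queue_id[OF d st]) auto
  then show ?thesis by (simp add: queueit_def Q_out_def setsize_record_def ok321_avoids)
qed

lemma stackit_via: "setsize_record \<tau> = setsize_record \<sigma> \<Longrightarrow> stackit \<tau> = stackit \<sigma>"
  by (simp add: stackit_def)

lemma queueit_via: "setsize_record \<tau> = setsize_record \<sigma> \<Longrightarrow> queueit \<tau> = queueit \<sigma>"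
  by (simp add: queueit_def)

theorem mainTheorem6:
  fixes n :: nat
  assumes "n \<ge> 1"
  shows "(\<forall>\<sigma>\<in>perms n. stackit (stackit \<sigma>) = stackit \<sigma>)
       \<and> stackit ` perms n = {\<sigma>\<in>perms n. avoids312 \<sigma>}
       \<and> (\<forall>\<sigma>\<in>perms n. avoids312 \<sigma> \<longrightarrow> stackit \<sigma> = \<sigma>)
       \<and> (\<forall>\<sigma>\<in>perms n. queueit (queueit \<sigma>) = queueit \<sigma>)
       \<and> queueit ` perms n = {\<sigma>\<in>perms n. avoids321 \<sigma>}
       \<and> (\<forall>\<sigma>\<in>perms n. avoids321 \<sigma> \<longrightarrow> queueit \<sigma> = \<sigma>)
       \<and> bij_betw queueit {\<sigma>\<in>perms n. avoids312 \<sigma>} {\<sigma>\<in>perms n. avoids321 \<sigma>}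
       \<and> bij_betw stackit {\<sigma>\<in>perms n. avoids321 \<sigma>} {\<sigma>\<in>perms n. avoids312 \<sigma>}
       \<and> (\<forall>\<sigma>\<in>perms n. avoids312 \<sigma> \<longrightarrow> stackit (queueit \<sigma>) = \<sigma>)
       \<and> (\<forall>\<sigma>\<in>perms n. avoids321 \<sigma> \<longrightarrow> queueit (stackit \<sigma>) = \<sigma>)"
proof -
  have s1: "\<forall>\<sigma>\<in>perms n. stackit (stackit \<sigma>) = stackit \<sigma>"
    using stack_facts stackit_via by blast
  have q1: "\<forall>\<sigma>\<in>perms n. queueit (queueit \<sigma>) = queueit \<sigma>"
    using queue_facts queueit_via by blast
  have s3: "\<forall>\<sigma>\<in>perms n. avoids312 \<sigma> \<longrightarrow> stackit \<sigma> = \<sigma>" using stack_fix by blast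
  have q3: "\<forall>\<sigma>\<in>perms n. avoids321 \<sigma> \<longrightarrow> queueit \<sigma> = \<sigma>" using queue_fix by blast
  have s2: "stackit ` perms n = {\<sigma>\<in>perms n. avoids312 \<sigma>}"
  proof
    show "stackit ` perms n \<subseteq> {\<sigma>\<in>perms n. avoids312 \<sigma>}"
    proof
      fix t assume "t \<in> stackit ` perms n"
      then obtain \<sigma> where \<sigma>: "\<sigma> \<in> perms n" "t = stackit \<sigma>" by blast
      then have "t \<in> perms n" using stack_facts by blast
      moreover have "stackit t = t" using s1 \<sigma> by simp
      ultimately show "t \<in> {\<sigma>\<in>perms n. avoids312 \<sigma>}" using stack_fix by blast
    qed
    show "{\<sigma>\<in>perms n. avoids312 \<sigma>} \<subseteq> stackit ` perms n"
    proof
      fix t assume "t \<in> {\<sigma>\<in>perms n. avoids312 \<sigma>}"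
      then have "t \<in> perms n" "stackit t = t" using s3 by auto
      then show "t \<in> stackit ` perms n" by (metis image_eqI)
    qed
  qed
  have q2: "queueit ` perms n = {\<sigma>\<in>perms n. avoids321 \<sigma>}"
  proof
    show "queueit ` perms n \<subseteq> {\<sigma>\<in>perms n. avoids321 \<sigma>}"
    proof
      fix t assume "t \<in> queueit ` perms n"
      then obtain \<sigma> where \<sigma>: "\<sigma> \<in> perms n" "t = queueit \<sigma>" by blast
      then have "t \<in> perms n" using queue_facts by blast
      moreover have "queueit t = t" using q1 \<sigma> by simp
      ultimately show "t \<in> {\<sigma>\<in>perms n. avoids321 \<sigma>}" using queue_fix by blast
    qed
    show "{\<sigma>\<in>perms n. avoids321 \<sigma>} \<subseteq> queueit ` perms n"
    proof
      fix t assume "t \<in> {\<sigma>\<in>perms n. avoids321 \<sigma>}"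
      then have "t \<in> perms n" "queueit t = t" using q3 by auto
      then show "t \<in> queueit ` perms n" by (metis image_eqI)
    qed
  qed
  have sq: "\<forall>\<sigma>\<in>perms n. avoids312 \<sigma> \<longrightarrow> stackit (queueit \<sigma>) = \<sigma>"
  proof (intro ballI impI)
    fix \<sigma> assume "\<sigma> \<in> perms n" "avoids312 \<sigma>"
    then have "stackit (queueit \<sigma>) = stackit \<sigma>" using queue_facts stackit_via by blast
    then show "stackit (queueit \<sigma>) = \<sigma>" using s3 \<open>\<sigma> \<in> perms n\<close> \<open>avoids312 \<sigma>\<close> by simp
  qed
  have qs: "\<forall>\<sigma>\<in>perms n. avoids321 \<sigma> \<longrightarrow> queueit (stackit \<sigma>) = \<sigma>"
  proof (intro ballI impI)
    fix \<sigma> assume "\<sigma> \<in> perms n" "avoids321 \<sigma>"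
    then have "queueit (stackit \<sigma>) = queueit \<sigma>" using stack_facts queueit_via by blast
    then show "queueit (stackit \<sigma>) = \<sigma>" using q3 \<open>\<sigma> \<in> perms n\<close> \<open>avoids321 \<sigma>\<close> by simp
  qed
  have im1: "queueit ` {\<sigma>\<in>perms n. avoids312 \<sigma>} \<subseteq> {\<sigma>\<in>perms n. avoids321 \<sigma>}" using q2 by blast
  have im2: "stackit ` {\<sigma>\<in>perms n. avoids321 \<sigma>} \<subseteq> {\<sigma>\<in>perms n. avoids312 \<sigma>}" using s2 by blast
  have b1: "bij_betw queueit {\<sigma>\<in>perms n. avoids312 \<sigma>} {\<sigma>\<in>perms n. avoids321 \<sigma>}"
    by (rule bij_betw_byWitness[where f'=stackit]) (use sq qs im1 im2 in auto)
  have b2: "bij_betw stackit {\<sigma>\<in>perms n. avoids321 \<sigma>} {\<sigma>\<in>perms n. avoids312 \<sigma>}"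
    by (rule bij_betw_byWitness[where f'=queueit]) (use sq qs im1 im2 in auto)
  show ?thesis using s1 s2 s3 q1 q2 q3 b1 b2 sq qs by blast
qed

end
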